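(* Let $\mathcal{T}$ be a finite or countably infinite set, let $\prec$ be a strict total order on $\mathcal{T}$, and let $\mathbf{p}, \mathbf{q}$ be probability distributions on $\mathcal{T}$. Let $\lhd$ denote the lexicographic order on $\mathcal{T} \times [0,1]$ induced by $(\mathcal{T},\prec)$ and $([0,1],<)$. Suppose that $\Pr[(X,U_1) \lhd (Y,U_0)] \ne 1/2$, where $Y \sim \mathbf{q}$, $X \sim \mathbf{p}$, and $U_0,U_1 \sim^{\mathrm{iid}} \mathrm{Uniform}(0,1)$ are mutually independent. For each positive integer $m$, let $X_0 \sim \mathbf{q}$, $X_1,\dots,X_m \sim^{\mathrm{iid}} \mathbf{p}$, $U_0,\dots,U_m \sim^{\mathrm{iid}} \mathrm{Uniform}(0,1)$ be mutually independent, and let $R = \sum_{j=1}^m \big(\mathbb{I}[X_j \prec X_0] + \mathbb{I}[X_j = X_0, U_j < U_0]\big)$. Then for all $m \ge 1$, $R$ is not uniformly distributed on $\{0,1,\dots,m\}$.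
   Context: The lexicographic order: $(x,u) \lhd (y,v)$ iff $x \prec y$, or $x = y$ and $u < v$. $\mathbb{I}[\cdot]$ denotes the indicator of an event. *)

theory Defs
  imports "HOL-Probability.Probability"
begin

definition lex_less :: "('a \<times> 'a) set \<Rightarrow> 'a \<times> real \<Rightarrow> 'a \<times> real \<Rightarrow> bool" where
  "lex_less r xu yv \<longleftrightarrow> (fst xu, fst yv) \<in> r \<or> (fst xu = fst yv \<and> snd xu < snd yv)"

definition unif01 :: "real measure" where
  "unif01 = uniform_measure lborel {0..1}"

text \<open>Joint law of (X, Y, U1, U0): X ~ p, Y ~ q, U1, U0 ~ Unif(0,1), all independent.\<close>
definition pair_space :: "'a pmf \<Rightarrow> 'a pmf \<Rightarrow> (('a \<times> 'a) \<times> (real \<times> real)) measure" where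
  "pair_space p q = (measure_pmf p \<Otimes>\<^sub>M measure_pmf q) \<Otimes>\<^sub>M (unif01 \<Otimes>\<^sub>M unif01)"

definition rank_space :: "'a pmf \<Rightarrow> 'a pmf \<Rightarrow> nat \<Rightarrow> ((nat \<Rightarrow> 'a) \<times> (nat \<Rightarrow> real)) measure" where
  "rank_space p q m =
     (PiM {0..m} (\<lambda>j. if j = 0 then measure_pmf q else measure_pmf p)) \<Otimes>\<^sub>M
     (PiM {0..m} (\<lambda>_. unif01))"

definition rank_stat :: "('a \<times> 'a) set \<Rightarrow> nat \<Rightarrow> (nat \<Rightarrow> 'a) \<times> (nat \<Rightarrow> real) \<Rightarrow> nat" where
  "rank_stat r m \<omega> = (\<Sum>j\<in>{1..m}.
      (if (fst \<omega> j, fst \<omega> 0) \<in> r then 1 else 0) +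
      (if fst \<omega> j = fst \<omega> 0 \<and> snd \<omega> j < snd \<omega> 0 then 1 else 0))"

end

theory Submission
  imports Defs
begin

lemma two_coord:
  assumes fin: "finite I" and ij: "i \<in> I" "j \<in> I" "i \<noteq> j" and M: "\<And>k. k \<in> I \<Longrightarrow> prob_space (M k)"
  shows "distr (PiM I M) (M i \<Otimes>\<^sub>M M j) (\<lambda>x. (x i, x j)) = M i \<Otimes>\<^sub>M M j"
proof -
  interpret N: prob_space "PiM I M" by (rule prob_space_PiM) (rule M)
  have rv: "\<And>k. k \<in> I \<Longrightarrow> N.random_variable (M k) (\<lambda>x. x k)" by simp
  have "distr (PiM I M) (PiM I M) (\<lambda>x. \<lambda>k\<in>I. x k) = distr (PiM I M) (PiM I M) (\<lambda>x. x)"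
    by (rule distr_cong) (auto simp: space_PiM PiE_def extensional_def)
  also have "\<dots> = PiM I M" by (rule distr_id)
  also have "\<dots> = (PiM I (\<lambda>k. distr (PiM I M) (M k) (\<lambda>x. x k)))"
    by (rule PiM_cong) (auto simp: distr_PiM_component M)
  finally have ind: "N.indep_vars M (\<lambda>k x. x k) I"
    using ij by (subst N.indep_vars_iff_distr_eq_PiM') (auto intro: rv)
  have "N.indep_var (PiM {i} M) (\<lambda>\<omega>. restrict (\<lambda>k. \<omega> k) {i}) (PiM {j} M) (\<lambda>\<omega>. restrict (\<lambda>k. \<omega> k) {j})"
    using ind ij by (intro N.indep_var_restrict) auto
  then have "N.indep_var (M i) ((\<lambda>f. f i) \<circ> (\<lambda>\<omega>. restrict (\<lambda>k. \<omega> k) {i})) (M j) ((\<lambda>f. f j) \<circ> (\<lambda>\<omega>. restrict (\<lambda>k. \<omega> k) {j}))"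
    by (rule N.indep_var_compose) auto
  then have "N.indep_var (M i) (\<lambda>\<omega>. \<omega> i) (M j) (\<lambda>\<omega>. \<omega> j)"
    by (simp add: comp_def)
  then have "distr (PiM I M) (M i) (\<lambda>\<omega>. \<omega> i) \<Otimes>\<^sub>M distr (PiM I M) (M j) (\<lambda>\<omega>. \<omega> j) = distr (PiM I M) (M i \<Otimes>\<^sub>M M j) (\<lambda>x. (x i, x j))"
    by (simp add: N.indep_var_distribution_eq)
  then show ?thesis using ij by (simp add: distr_PiM_component M)
qed


lemma event_sets:
  fixes r :: "('a::countable \<times> 'a) set" and p q :: "'a pmf"
  shows "{\<omega> \<in> space (pair_space p q).
              lex_less r (fst (fst \<omega>), fst (snd \<omega>)) (snd (fst \<omega>), snd (snd \<omega>))} \<in> sets (pair_space p q)"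
proof -
  have s: "sets (measure_pmf p \<Otimes>\<^sub>M measure_pmf q) = sets (count_space (UNIV::('a\<times>'a) set))"
  proof -
    have "sets (measure_pmf p \<Otimes>\<^sub>M measure_pmf q) = sets (count_space (UNIV::'a set) \<Otimes>\<^sub>M count_space (UNIV::'a set))"
      by (rule sets_pair_measure_cong) (simp_all add: sets_measure_pmf_count_space)
    also have "count_space (UNIV::'a set) \<Otimes>\<^sub>M count_space (UNIV::'a set) = count_space (UNIV \<times> UNIV)"
      by (rule pair_measure_countable) auto
    finally show ?thesis by simp
  qed
  have u: "sets (unif01 \<Otimes>\<^sub>M unif01) = sets (borel :: (real \<times> real) measure)"
    unfolding unif01_def by (subst borel_prod[symmetric]) (auto intro!: sets_pair_measure_cong)
  have S: "sets (pair_space p q) = sets (count_space UNIV \<Otimes>\<^sub>M (borel :: (real \<times> real) measure))"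
    unfolding pair_space_def by (rule sets_pair_measure_cong[OF s u])
  have sp: "space (pair_space p q) = space (count_space UNIV \<Otimes>\<^sub>M (borel :: (real \<times> real) measure))"
    using S sets_eq_imp_space_eq by blast
  have "{\<omega> \<in> space (count_space UNIV \<Otimes>\<^sub>M (borel :: (real \<times> real) measure)).
              lex_less r (fst (fst \<omega>), fst (snd \<omega>)) (snd (fst \<omega>), snd (snd \<omega>))} \<in> sets (count_space UNIV \<Otimes>\<^sub>M (borel :: (real \<times> real) measure))"
  proof -
    have e: "{\<omega> \<in> space (count_space UNIV \<Otimes>\<^sub>M (borel :: (real \<times> real) measure)).
              lex_less r (fst (fst \<omega>), fst (snd \<omega>)) (snd (fst \<omega>), snd (snd \<omega>))} = (r \<times> UNIV) \<union> (Id \<times> {x::real\<times>real. fst x < snd x})"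
      by (auto simp: lex_less_def space_pair_measure)
    have o: "open {x::real\<times>real. fst x < snd x}"
      by (intro open_Collect_less continuous_intros)
    show ?thesis unfolding e
      by (intro sets.Un pair_measureI) (auto intro: borel_open o)
  qed
  then show ?thesis using S sp by simp
qed

lemma prob_unif01: "prob_space unif01" unfolding unif01_def by (rule prob_space_uniform_measure) auto
lemma space_unif01: "space unif01 = UNIV" unfolding unif01_def by simp

lemma distr_F:
  fixes p q :: "'a pmf"
  assumes j: "j \<in> {1..m}"
  shows "distr (rank_space p q m) (pair_space p q)
     (\<lambda>\<omega>. ((fst \<omega> j, fst \<omega> 0), (snd \<omega> j, snd \<omega> 0))) = pair_space p q"
proof -
  let ?Mx = "\<lambda>k. if k = 0 then measure_pmf q else measure_pmf p"
  have j0: "j \<noteq> 0" using j by auto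
  have dx: "distr (PiM {0..m} ?Mx) (measure_pmf p \<Otimes>\<^sub>M measure_pmf q) (\<lambda>x. (x j, x 0))
      = measure_pmf p \<Otimes>\<^sub>M measure_pmf q"
    using two_coord[of "{0..m}" j 0 ?Mx] j j0 by (auto simp: prob_space_measure_pmf)
  have du: "distr (PiM {0..m} (\<lambda>_. unif01)) (unif01 \<Otimes>\<^sub>M unif01) (\<lambda>x. (x j, x 0))
      = unif01 \<Otimes>\<^sub>M unif01"
    using two_coord[of "{0..m}" j 0 "\<lambda>_. unif01"] j j0 by (auto simp: prob_unif01)
  have mj: "(\<lambda>x. x j) \<in> measurable (PiM {0..m} ?Mx) (measure_pmf p)"
    using measurable_component_singleton[of j "{0..m}" ?Mx] j j0 by simp
  have m0: "(\<lambda>x. x 0) \<in> measurable (PiM {0..m} ?Mx) (measure_pmf q)"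
    using measurable_component_singleton[of 0 "{0..m}" ?Mx] by simp
  have sf: "sigma_finite_measure (distr (PiM {0..m} (\<lambda>_. unif01)) (unif01 \<Otimes>\<^sub>M unif01) (\<lambda>x. (x j, x 0)))"
    unfolding du by (intro prob_space_imp_sigma_finite prob_space_pair prob_unif01)
  have "pair_space p q = distr (PiM {0..m} ?Mx \<Otimes>\<^sub>M PiM {0..m} (\<lambda>_. unif01)) (pair_space p q)
      (\<lambda>(x, y). ((x j, x 0), (y j, y 0)))"
    unfolding pair_space_def
    apply (subst dx[symmetric], subst du[symmetric])
    apply (rule pair_measure_distr)
    using j j0 by (auto intro!: sf measurable_Pair mj m0)
  also have "(\<lambda>(x, y). ((x j, x 0), (y j, y 0))) = (\<lambda>\<omega>. ((fst \<omega> j, fst \<omega> 0), (snd \<omega> j, snd \<omega> 0)))"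
    by auto
  finally show ?thesis unfolding rank_space_def by simp
qed

lemma F_meas:
  fixes p q :: "'a pmf"
  assumes j: "j \<in> {1..m}"
  shows "(\<lambda>\<omega>. ((fst \<omega> j, fst \<omega> 0), (snd \<omega> j, snd \<omega> 0))) \<in> measurable (rank_space p q m) (pair_space p q)"
proof -
  let ?Mx = "\<lambda>k. if k = 0 then measure_pmf q else measure_pmf p"
  have j0: "j \<noteq> 0" using j by auto
  have mj: "(\<lambda>x. x j) \<in> measurable (PiM {0..m} ?Mx) (measure_pmf p)"
    using measurable_component_singleton[of j "{0..m}" ?Mx] j j0 by simp
  have m0: "(\<lambda>x. x 0) \<in> measurable (PiM {0..m} ?Mx) (measure_pmf q)"
    using measurable_component_singleton[of 0 "{0..m}" ?Mx] by simp
  have uj: "(\<lambda>x. x j) \<in> measurable (PiM {0..m} (\<lambda>_. unif01)) unif01"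
    using measurable_component_singleton[of j "{0..m}" "\<lambda>_. unif01"] j by simp
  have u0: "(\<lambda>x. x 0) \<in> measurable (PiM {0..m} (\<lambda>_. unif01)) unif01"
    using measurable_component_singleton[of 0 "{0..m}" "\<lambda>_. unif01"] by simp
  show ?thesis unfolding rank_space_def pair_space_def
    by (intro measurable_Pair measurable_compose[OF measurable_fst mj] measurable_compose[OF measurable_fst m0]
        measurable_compose[OF measurable_snd uj] measurable_compose[OF measurable_snd u0])
qed

theorem corollary3p5:
  fixes r :: "('a::countable \<times> 'a) set" and p q :: "'a pmf"
  assumes "strict_linear_order r"
    and "measure (pair_space p q)
           {\<omega> \<in> space (pair_space p q).
              lex_less r (fst (fst \<omega>), fst (snd \<omega>)) (snd (fst \<omega>), snd (snd \<omega>))} \<noteq> 1/2"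
  shows "\<forall>m::nat \<ge> 1. \<not> (\<forall>k\<in>{0..m}.
           measure (rank_space p q m) {\<omega> \<in> space (rank_space p q m). rank_stat r m \<omega> = k}
             = 1 / real (m + 1))"
proof (intro allI impI notI)
  fix m :: nat assume m1: "m \<ge> 1"
  assume unif: "\<forall>k\<in>{0..m}.
           measure (rank_space p q m) {\<omega> \<in> space (rank_space p q m). rank_stat r m \<omega> = k}
             = 1 / real (m + 1)"
  let ?M = "rank_space p q m"
  let ?E = "{\<omega> \<in> space (pair_space p q).
              lex_less r (fst (fst \<omega>), fst (snd \<omega>)) (snd (fst \<omega>), snd (snd \<omega>))}"
  define P where "P = measure (pair_space p q) ?E"
  define A where "A = (\<lambda>j. {\<omega> \<in> space ?M. lex_less r (fst \<omega> j, snd \<omega> j) (fst \<omega> 0, snd \<omega> 0)})"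
  have irr: "(x, x) \<notin> r" for x
    using assms(1) unfolding strict_linear_order_on_def irrefl_on_def by auto
  interpret M: prob_space ?M
    unfolding rank_space_def
    by (intro prob_space_pair prob_space_PiM) (auto simp: prob_space_measure_pmf prob_unif01)
  have spair: "space (pair_space p q) = UNIV"
    by (simp add: pair_space_def space_pair_measure space_unif01)
  have A_eq: "A j = (\<lambda>\<omega>. ((fst \<omega> j, fst \<omega> 0), (snd \<omega> j, snd \<omega> 0))) -` ?E \<inter> space ?M" for j
    unfolding A_def by (auto simp: spair)
  have F_meas: "(\<lambda>\<omega>. ((fst \<omega> j, fst \<omega> 0), (snd \<omega> j, snd \<omega> 0))) \<in> measurable ?M (pair_space p q)" if "j \<in> {1..m}" for j
    using that by (rule F_meas)
  have A_sets: "A j \<in> sets ?M" if "j \<in> {1..m}" for j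
    unfolding A_eq using F_meas[OF that] event_sets[of p q r] by (rule measurable_sets)
  have A_sub: "A j \<inter> space ?M = A j" for j by (auto simp: A_def)
  have A_meas: "measure ?M (A j) = P" if "j \<in> {1..m}" for j
  proof -
    have "measure ?M (A j) = measure (distr ?M (pair_space p q) (\<lambda>\<omega>. ((fst \<omega> j, fst \<omega> 0), (snd \<omega> j, snd \<omega> 0)))) ?E"
      unfolding A_eq by (rule measure_distr[symmetric]) (use F_meas[OF that] event_sets[of p q r] in auto)
    then show ?thesis unfolding distr_F[OF that] P_def .
  qed
  have R_eq: "real (rank_stat r m \<omega>) = (\<Sum>j\<in>{1..m}. indicator (A j) \<omega>)" if "\<omega> \<in> space ?M" for \<omega>
    unfolding rank_stat_def A_def of_nat_sum using that irr
    by (intro sum.cong refl) (auto simp: lex_less_def indicator_def)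
  have R_le: "rank_stat r m \<omega> \<le> m" for \<omega>
  proof -
    have "rank_stat r m \<omega> \<le> (\<Sum>j\<in>{1..m}. (1::nat))"
      unfolding rank_stat_def using irr by (intro sum_mono) auto
    then show ?thesis by simp
  qed
  have R_meas: "(\<lambda>\<omega>. real (rank_stat r m \<omega>)) \<in> borel_measurable ?M"
  proof -
    have "(\<lambda>\<omega>. \<Sum>j\<in>{1..m}. indicator (A j) \<omega> :: real) \<in> borel_measurable ?M"
      using A_sets by (intro borel_measurable_sum borel_measurable_indicator) auto
    then show ?thesis by (rule measurable_cong[THEN iffD1, rotated]) (simp add: R_eq)
  qed
  have B_sets: "{\<omega> \<in> space ?M. rank_stat r m \<omega> = k} \<in> sets ?M" for k
  proof -
    have "{\<omega> \<in> space ?M. real (rank_stat r m \<omega>) = real k} \<in> sets ?M"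
      using R_meas by measurable
    then show ?thesis by simp
  qed
  have "integral\<^sup>L ?M (\<lambda>\<omega>. real (rank_stat r m \<omega>)) = integral\<^sup>L ?M (\<lambda>\<omega>. \<Sum>j\<in>{1..m}. indicator (A j) \<omega>)"
    by (rule Bochner_Integration.integral_cong) (auto simp: R_eq)
  also have "\<dots> = (\<Sum>j\<in>{1..m}. measure ?M (A j))"
    by (subst Bochner_Integration.integral_sum) (auto simp: A_sub intro!: M.integrable_const_bound[where B=1] sum.cong borel_measurable_indicator A_sets)
  also have "\<dots> = real m * P" using A_meas by simp
  finally have E1: "integral\<^sup>L ?M (\<lambda>\<omega>. real (rank_stat r m \<omega>)) = real m * P" .
  have "integral\<^sup>L ?M (\<lambda>\<omega>. real (rank_stat r m \<omega>)) =
      integral\<^sup>L ?M (\<lambda>\<omega>. \<Sum>k\<in>{0..m}. real k * indicator {\<omega> \<in> space ?M. rank_stat r m \<omega> = k} \<omega>)"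
  proof (rule Bochner_Integration.integral_cong[OF refl])
    fix \<omega> assume w: "\<omega> \<in> space ?M"
    have "(\<Sum>k\<in>{0..m}. real k * indicator {\<omega> \<in> space ?M. rank_stat r m \<omega> = k} \<omega>)
        = (\<Sum>k\<in>{0..m}. if k = rank_stat r m \<omega> then real k else 0)"
      using w by (intro sum.cong refl) (simp add: indicator_def)
    also have "\<dots> = real (rank_stat r m \<omega>)" using R_le[of \<omega>] by (simp add: sum.delta)
    finally show "real (rank_stat r m \<omega>) = (\<Sum>k\<in>{0..m}. real k * indicator {\<omega> \<in> space ?M. rank_stat r m \<omega> = k} \<omega>)" by simp
  qed
  also have "\<dots> = (\<Sum>k\<in>{0..m}. real k * measure ?M {\<omega> \<in> space ?M. rank_stat r m \<omega> = k})"
    by (subst Bochner_Integration.integral_sum) (auto simp: B_sets intro!: sum.cong Bochner_Integration.integrable_mult_right M.integrable_const_bound[where B=1] borel_measurable_indicator B_sets)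
  also have "\<dots> = (\<Sum>k\<in>{0..m}. real k / real (m + 1))"
    using unif by (intro sum.cong) auto
  also have "\<dots> = (\<Sum>k\<in>{0..m}. real k) / real (m + 1)" by (simp add: sum_divide_distrib)
  also have "\<dots> = real m / 2"
  proof -
    have g: "(\<Sum>i = 0..n. real i) = real n * (real n + 1) / 2" for n
      by (induction n) (simp_all add: field_simps)
    then show ?thesis by (simp add: field_simps)
  qed
  finally have "real m * P = real m / 2" using E1 by simp
  then have "P = 1/2" using m1 by (simp add: field_simps)
  then show False using assms(2) unfolding P_def by simp
qed

end
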